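(* Suppose $\beta_n \phi^+_n \phi^-_n \to 0$. Then for any non-trivial solution $\psi_n = a^+_n \phi^+_n + a^-_n \phi^-_n$ of $(-\Delta+V)\psi=0$ with $a^\pm_n$ satisfying the recurrence $\begin{pmatrix} a^+_{n+1}\\ a^-_{n+1}\end{pmatrix} = (I+M_n)\begin{pmatrix} a^+_{n}\\ a^-_{n}\end{pmatrix}$, one of the following must be true: (1) Given any integer $N$, there is an integer $p>N$ such that both $a^+_p$ and $a^-_p$ are non-zero. (2) There is an integer $p_0$ such that $a^+_{p_0+k} = a^+_{p_0} \neq 0$ and $a^-_{p_0+k} = 0$ for all $k \geq 0$. (3) There is an integer $p_0$ such that $a^-_{p_0+k} = a^-_{p_0} \neq 0$ and $a^+_{p_0+k} = 0$ for all $k \geq 0$.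
   Context: On the positive integers, $(\Delta f)_n = f_{n+1}+f_{n-1}-2f_n$; $V, V^0$ are real potentials, $\phi^\pm$ are independent solutions of $(-\Delta+V^0)\phi=0$ with Wronskian $W=\phi^-_n\phi^+_{n+1}-\phi^-_{n+1}\phi^+_n$, and $\beta_n=(V_n-V^0_n)/W$. Solutions $\psi$ of $(-\Delta+V)\psi=0$ are represented as $\psi_n=a^+_n\phi^+_n+a^-_n\phi^-_n$ where the coefficients satisfy $(\nabla^-a^+_n)\phi^+_{n-1}+(\nabla^-a^-_n)\phi^-_{n-1}=0$ (with $\nabla^-f_n=f_n-f_{n-1}$, $\phi^\pm_0=0$) and the recurrence with $M_n := \beta_n\begin{pmatrix}\phi^+_n\phi^-_n & (\phi^-_n)^2\\ -(\phi^+_n)^2 & -\phi^+_n\phi^-_n\end{pmatrix}$. *)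

theory Defs
  imports "HOL-Analysis.Analysis"
begin

text \<open>Sequences on the positive integers are modelled as functions nat \<Rightarrow> real;
  only indices n \<ge> 1 matter (index 0 only enters through the value f 0 in
  the discrete Laplacian at n = 1).\<close>

definition dlap :: "(nat \<Rightarrow> real) \<Rightarrow> nat \<Rightarrow> real" where
  "dlap f n = f (n + 1) + f (n - 1) - 2 * f n"

definition nabla_minus :: "(nat \<Rightarrow> real) \<Rightarrow> nat \<Rightarrow> real" where
  "nabla_minus f n = f n - f (n - 1)"

definition is_solution :: "(nat \<Rightarrow> real) \<Rightarrow> (nat \<Rightarrow> real) \<Rightarrow> bool" where
  "is_solution V f \<longleftrightarrow> (\<forall>n\<ge>1. - dlap f n + V n * f n = 0)"

text \<open>Wronskian W = phi^-_n phi^+_{n+1} - phi^-_{n+1} phi^+_n (independent of n for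
  two solutions of the same equation); we evaluate it at n = 1.\<close>
definition wronskian :: "(nat \<Rightarrow> real) \<Rightarrow> (nat \<Rightarrow> real) \<Rightarrow> real" where
  "wronskian phip phim = phim 1 * phip 2 - phim 2 * phip 1"

definition beta :: "(nat \<Rightarrow> real) \<Rightarrow> (nat \<Rightarrow> real) \<Rightarrow> (nat \<Rightarrow> real) \<Rightarrow> (nat \<Rightarrow> real) \<Rightarrow> nat \<Rightarrow> real" where
  "beta V V0 phip phim n = (V n - V0 n) / wronskian phip phim"

definition Mmat :: "(nat \<Rightarrow> real) \<Rightarrow> (nat \<Rightarrow> real) \<Rightarrow> (nat \<Rightarrow> real) \<Rightarrow> (nat \<Rightarrow> real) \<Rightarrow> nat \<Rightarrow> real^2^2" where
  "Mmat V V0 phip phim n =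
     beta V V0 phip phim n *\<^sub>R
       vector [vector [phip n * phim n, (phim n)^2],
               vector [- ((phip n)^2), - (phip n * phim n)]]"

end

theory Submission
  imports Defs
begin

lemma comp_vec:
  fixes b p m a c :: real
  shows "((mat 1 + b *\<^sub>R vector [vector [p*m, m^2], vector [-(p^2), -(p*m)]]) *v vector [a,c] :: real^2)
     = vector [a + b*(p*m*a + m^2*c), c - b*(p^2*a + p*m*c)]"
  by (simp add: vec_eq_iff forall_2 matrix_vector_mult_def sum_2 mat_def vector_2 algebra_simps)

theorem proposition1:
  fixes V V0 phip phim psi ap am :: "nat \<Rightarrow> real"
  assumes sol_p: "is_solution V0 phip"
    and sol_m: "is_solution V0 phim"
    and indep: "wronskian phip phim \<noteq> 0"
    and lim: "(\<lambda>n. beta V V0 phip phim n * phip n * phim n) \<longlonglongrightarrow> 0"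
    and sol_psi: "is_solution V psi"
    and nontriv: "\<exists>n\<ge>1. psi n \<noteq> 0"
    and repr: "\<And>n. n \<ge> 1 \<Longrightarrow> psi n = ap n * phip n + am n * phim n"
    and constr: "\<And>n. n \<ge> 2 \<Longrightarrow>
                   nabla_minus ap n * phip (n - 1) + nabla_minus am n * phim (n - 1) = 0"
    and recur: "\<And>n. n \<ge> 1 \<Longrightarrow>
                   vector [ap (n + 1), am (n + 1)]
                     = (mat 1 + Mmat V V0 phip phim n) *v vector [ap n, am n]"
  shows "(\<forall>N::nat. \<exists>p>N. ap p \<noteq> 0 \<and> am p \<noteq> 0)
       \<or> (\<exists>p0\<ge>1. ap p0 \<noteq> 0 \<and> (\<forall>k. ap (p0 + k) = ap p0 \<and> am (p0 + k) = 0))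
       \<or> (\<exists>p0\<ge>1. am p0 \<noteq> 0 \<and> (\<forall>k. am (p0 + k) = am p0 \<and> ap (p0 + k) = 0))"
proof (rule ccontr)
  define b where "b = beta V V0 phip phim"
  assume H: "\<not> ?thesis"
  have rec: "ap (n+1) = ap n + b n*(phip n*phim n*ap n + (phim n)^2*am n)
           \<and> am (n+1) = am n - b n*((phip n)^2*ap n + phip n*phim n*am n)" if "n \<ge> 1" for n
  proof -
    have "(vector [ap (n + 1), am (n + 1)] :: real^2) =
      vector [ap n + b n*(phip n*phim n*ap n + (phim n)^2*am n),
              am n - b n*((phip n)^2*ap n + phip n*phim n*am n)]"
      using recur[OF that] unfolding Mmat_def comp_vec b_def .
    then show ?thesis by (metis vector_1 vector_2)
  qed
  from lim have "\<forall>\<^sub>F n in sequentially. dist (b n * phip n * phim n) 0 < 1"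
    unfolding b_def using tendstoD[OF lim zero_less_one] by simp
  hence "\<forall>\<^sub>F n in sequentially. \<bar>b n * phip n * phim n\<bar> < 1" by (simp add: dist_real_def)
  then obtain N0 where N0: "\<And>n. n \<ge> N0 \<Longrightarrow> \<bar>b n * phip n * phim n\<bar> < 1"
    by (auto simp: eventually_sequentially)
  from H obtain N where N: "\<And>p. p > N \<Longrightarrow> ap p = 0 \<or> am p = 0" by auto
  define K where "K = max (max N0 1) (N+1)"
  have stepP: "ap (n+1) = ap n \<and> am (n+1) = 0" if "n \<ge> K" "ap n \<noteq> 0" "am n = 0" for n
  proof -
    have r: "ap (n+1) = ap n * (1 + b n*phip n*phim n)" "am (n+1) = - b n*(phip n)^2*ap n"
      using rec[of n] that K_def by (auto simp: algebra_simps)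
    have "1 + b n*phip n*phim n \<noteq> 0" using N0[of n] that K_def by auto
    hence "ap (n+1) \<noteq> 0" using r that by simp
    hence "am (n+1) = 0" using N[of "n+1"] that K_def by auto
    hence "b n * phip n * phip n = 0" using r that by (simp add: power2_eq_square)
    hence "b n * phip n = 0" by (metis mult_zero_left mult_zero_right no_zero_divisors)
    thus ?thesis using r \<open>am (n+1) = 0\<close> by simp
  qed
  have stepM: "am (n+1) = am n \<and> ap (n+1) = 0" if "n \<ge> K" "am n \<noteq> 0" "ap n = 0" for n
  proof -
    have r: "am (n+1) = am n * (1 - b n*phip n*phim n)" "ap (n+1) = b n*(phim n)^2*am n"
      using rec[of n] that K_def by (auto simp: algebra_simps)
    have "1 - b n*phip n*phim n \<noteq> 0" using N0[of n] that K_def by auto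
    hence "am (n+1) \<noteq> 0" using r that by simp
    hence "ap (n+1) = 0" using N[of "n+1"] that K_def by auto
    hence "b n * phim n * phim n = 0" using r that by (simp add: power2_eq_square)
    hence "b n * phim n = 0" by (metis mult_zero_left mult_zero_right no_zero_divisors)
    hence "b n*phip n*phim n = 0" by (metis mult.commute mult_zero_left mult.assoc)
    thus ?thesis using r \<open>ap (n+1) = 0\<close> by simp
  qed
  have zero: "ap p = 0 \<and> am p = 0" if "p \<ge> K" for p
  proof (rule ccontr)
    assume nz: "\<not> (ap p = 0 \<and> am p = 0)"
    have one: "ap p = 0 \<or> am p = 0" using N[of p] that K_def by auto
    show False
    proof (cases "ap p \<noteq> 0")
      case True
      hence am0: "am p = 0" using one by auto
      have "\<forall>k. ap (p + k) = ap p \<and> am (p + k) = 0"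
      proof
        fix k show "ap (p + k) = ap p \<and> am (p + k) = 0"
        proof (induction k)
          case (Suc k)
          have "ap (p + k + 1) = ap (p+k) \<and> am (p + k + 1) = 0"
            using stepP[of "p+k"] Suc True am0 that by auto
          thus ?case using Suc by simp
        qed (use True am0 in auto)
      qed
      thus False using H True that K_def by auto
    next
      case False
      hence am0: "am p \<noteq> 0" and ap0: "ap p = 0" using nz by auto
      have "\<forall>k. am (p + k) = am p \<and> ap (p + k) = 0"
      proof
        fix k show "am (p + k) = am p \<and> ap (p + k) = 0"
        proof (induction k)
          case (Suc k)
          have "am (p + k + 1) = am (p+k) \<and> ap (p + k + 1) = 0"
            using stepM[of "p+k"] Suc am0 ap0 that by auto
          thus ?case using Suc by simp
        qed (use am0 ap0 in auto)
      qed
      thus False using H am0 that K_def by auto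
    qed
  qed
  have psiz: "psi p = 0" if "p \<ge> K" for p using zero[OF that] repr[of p] that K_def by auto
  have bk: "psi (K - j) = 0 \<and> psi (K - j + 1) = 0" if "j \<le> K" for j
    using that
  proof (induction j)
    case 0 then show ?case using psiz by auto
  next
    case (Suc j)
    define n where "n = K - j"
    have n1: "n \<ge> 1" using Suc.prems n_def by auto
    have z: "psi n = 0" "psi (n+1) = 0" using Suc n_def by auto
    have "- dlap psi n + V n * psi n = 0" using sol_psi n1 unfolding is_solution_def by auto
    hence "psi (n - 1) = 0" using z unfolding dlap_def by simp
    moreover have "K - Suc j = n - 1" "K - Suc j + 1 = n" using Suc.prems n_def by auto
    ultimately show ?case using z by simp
  qed
  from nontriv obtain n where "n \<ge> 1" "psi n \<noteq> 0" by auto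
  moreover have "psi n = 0"
  proof (cases "n \<ge> K")
    case True then show ?thesis using psiz by auto
  next
    case False
    then show ?thesis using bk[of "K - n"] by auto
  qed
  ultimately show False by simp
qed

end
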